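(* Let $R$ be a DT ring. Then the factor ring $R/J(R)$ is reduced (has no nonzero nilpotent elements).
   Context: All rings are associative with identity; $J(R)$ is the Jacobson radical, $U(R)$ the group of units. $\Delta(R)=\{x\in R: x+u\in U(R)\text{ for all }u\in U(R)\}$. $\mathrm{Tr}(R)=\{x\in R: x^3=x\}$. A ring $R$ is a DT ring if every $r\in R$ can be written $r=e+d$ with $e\in\mathrm{Tr}(R)$ and $d\in\Delta(R)$. *)

theory Defs
  imports Main
begin

definition units_of_ring :: "'a::ring_1 set" where
  "units_of_ring = {u. \<exists>v. u * v = 1 \<and> v * u = 1}"

definition Delta :: "'a::ring_1 set" where
  "Delta = {x. \<forall>u\<in>units_of_ring. x + u \<in> units_of_ring}"

definition Tr :: "'a::ring_1 set" where
  "Tr = {x. x ^ 3 = x}"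

definition DT_ring :: "'a::ring_1 itself \<Rightarrow> bool" where
  "DT_ring _ \<longleftrightarrow> (\<forall>r::'a. \<exists>e\<in>Tr. \<exists>d\<in>Delta. r = e + d)"

definition left_ideal :: "'a::ring_1 set \<Rightarrow> bool" where
  "left_ideal I \<longleftrightarrow> 0 \<in> I \<and> (\<forall>x\<in>I. \<forall>y\<in>I. x - y \<in> I) \<and> (\<forall>r. \<forall>x\<in>I. r * x \<in> I)"

definition maximal_left_ideal :: "'a::ring_1 set \<Rightarrow> bool" where
  "maximal_left_ideal M \<longleftrightarrow> left_ideal M \<and> M \<noteq> UNIV \<and>
     (\<forall>I. left_ideal I \<and> M \<subseteq> I \<longrightarrow> I = M \<or> I = UNIV)"

definition jacobson :: "'a::ring_1 set" where
  "jacobson = \<Inter> {M. maximal_left_ideal M}"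

(* R/J(R) is reduced: a coset x + J(R) with (x + J)^n = 0 is zero, i.e. x^n \<in> J \<Longrightarrow> x \<in> J *)
definition quotient_by_jacobson_reduced :: "'a::ring_1 itself \<Rightarrow> bool" where
  "quotient_by_jacobson_reduced _ \<longleftrightarrow>
     (\<forall>(x::'a) (n::nat). x ^ n \<in> jacobson \<longrightarrow> x \<in> jacobson)"

end

theory Submission
  imports Defs
begin

section \<open>Units\<close>

lemma U_I: "(u::'a::ring_1) * v = 1 \<Longrightarrow> v * u = 1 \<Longrightarrow> u \<in> units_of_ring"
  unfolding units_of_ring_def by auto

lemma U_E: "(u::'a::ring_1) \<in> units_of_ring \<Longrightarrow> (\<And>v. u * v = 1 \<Longrightarrow> v * u = 1 \<Longrightarrow> P) \<Longrightarrow> P"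
  unfolding units_of_ring_def by auto

lemma U_one: "(1::'a::ring_1) \<in> units_of_ring"
  by (rule U_I[of 1 1]) auto

lemma U_mult:
  assumes "(u::'a::ring_1) \<in> units_of_ring" "v \<in> units_of_ring"
  shows "u * v \<in> units_of_ring"
proof -
  obtain u' where u: "u * u' = 1" "u' * u = 1" using assms(1) by (rule U_E)
  obtain v' where v: "v * v' = 1" "v' * v = 1" using assms(2) by (rule U_E)
  have "u * v * (v' * u') = 1" by (metis u(1) v(1) mult.assoc mult_1_left)
  moreover have "(v' * u') * (u * v) = 1" by (metis u(2) v(2) mult.assoc mult_1_left)
  ultimately show ?thesis by (rule U_I)
qed

lemma U_neg: "(u::'a::ring_1) \<in> units_of_ring \<Longrightarrow> - u \<in> units_of_ring"
  by (erule U_E, rule U_I[of _ "- _"]) auto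

lemma U_sqz: "(y::'a::ring_1) * y = 0 \<Longrightarrow> 1 + y \<in> units_of_ring"
  by (rule U_I[of _ "1 - y"]) (auto simp: algebra_simps)

lemma U_jac:
  assumes "1 + (a::'a::ring_1) * b \<in> units_of_ring"
  shows "1 + b * a \<in> units_of_ring"
proof -
  obtain c where c: "(1 + a * b) * c = 1" "c * (1 + a * b) = 1" using assms by (rule U_E)
  have c1: "c + a * (b * c) = 1" using c(1) by (simp add: algebra_simps)
  have c2: "c + c * (a * b) = 1" using c(2) by (simp add: algebra_simps)
  have "(1 + b * a) * (1 - b * c * a) = 1 + b * a - b * (c + a * (b * c)) * a"
    by (simp add: algebra_simps)
  also have "\<dots> = 1" using c1 by simp
  finally have 1: "(1 + b * a) * (1 - b * c * a) = 1" .
  have "(1 - b * c * a) * (1 + b * a) = 1 + b * a - b * (c + c * (a * b)) * a"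
    by (simp add: algebra_simps)
  also have "\<dots> = 1" using c2 by simp
  finally have 2: "(1 - b * c * a) * (1 + b * a) = 1" .
  show ?thesis using 1 2 by (rule U_I)
qed

section \<open>Delta\<close>

lemma D_D: "(d::'a::ring_1) \<in> Delta \<Longrightarrow> u \<in> units_of_ring \<Longrightarrow> d + u \<in> units_of_ring"
  unfolding Delta_def by auto

lemma D_I: "(\<And>u. u \<in> units_of_ring \<Longrightarrow> (d::'a::ring_1) + u \<in> units_of_ring) \<Longrightarrow> d \<in> Delta"
  unfolding Delta_def by auto

lemma D_neg: "(d::'a::ring_1) \<in> Delta \<Longrightarrow> - d \<in> Delta"
proof (rule D_I)
  fix u :: 'a assume "d \<in> Delta" "u \<in> units_of_ring"
  then have "d + - u \<in> units_of_ring" by (meson D_D U_neg)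
  then have "- (d + - u) \<in> units_of_ring" by (rule U_neg)
  then show "- d + u \<in> units_of_ring" by (simp add: algebra_simps)
qed

lemma D_add: "(a::'a::ring_1) \<in> Delta \<Longrightarrow> b \<in> Delta \<Longrightarrow> a + b \<in> Delta"
proof (rule D_I)
  fix u :: 'a assume "a \<in> Delta" "b \<in> Delta" "u \<in> units_of_ring"
  then have "a + (b + u) \<in> units_of_ring" by (simp add: D_D)
  then show "a + b + u \<in> units_of_ring" by (simp add: add.assoc)
qed

lemma D_one: "(d::'a::ring_1) \<in> Delta \<Longrightarrow> 1 + d \<in> units_of_ring"
  by (metis D_D U_one add.commute)

lemma D_lunit:
  assumes "(u::'a::ring_1) \<in> units_of_ring" "d \<in> Delta"
  shows "u * d \<in> Delta"
proof (rule D_I)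
  fix v :: 'a assume v: "v \<in> units_of_ring"
  obtain u' where u: "u * u' = 1" "u' * u = 1" using assms(1) by (rule U_E)
  have "u' \<in> units_of_ring" using u by (intro U_I[of u' u]) auto
  then have "d + u' * v \<in> units_of_ring" using assms(2) v by (simp add: D_D U_mult)
  then have "u * (d + u' * v) \<in> units_of_ring" using assms(1) by (simp add: U_mult)
  moreover have "u * (d + u' * v) = u * d + v" using u
    by (simp add: algebra_simps flip: mult.assoc)
  ultimately show "u * d + v \<in> units_of_ring" by simp
qed

lemma D_runit:
  assumes "(u::'a::ring_1) \<in> units_of_ring" "d \<in> Delta"
  shows "d * u \<in> Delta"
proof (rule D_I)
  fix v :: 'a assume v: "v \<in> units_of_ring"
  obtain u' where u: "u * u' = 1" "u' * u = 1" using assms(1) by (rule U_E)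
  have "u' \<in> units_of_ring" using u by (intro U_I[of u' u]) auto
  then have "d + v * u' \<in> units_of_ring" using assms(2) v by (simp add: D_D U_mult)
  then have "(d + v * u') * u \<in> units_of_ring" using assms(1) by (simp add: U_mult)
  moreover have "(d + v * u') * u = d * u + v" using u
    by (simp add: algebra_simps mult.assoc)
  ultimately show "d * u + v \<in> units_of_ring" by simp
qed

lemma D_ry:
  assumes "1 + (y::'a::ring_1) \<in> units_of_ring" "d \<in> Delta"
  shows "d * y \<in> Delta"
proof -
  have "d * (1 + y) + - d \<in> Delta" using assms by (intro D_add D_runit D_neg)
  then show ?thesis by (simp add: algebra_simps)
qed

lemma D_hdg:
  assumes h: "(h::'a::ring_1) * h = h" and d: "d \<in> Delta"
  shows "h * d * (1 - h) \<in> Delta"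
proof (rule D_I)
  fix u :: 'a assume uU: "u \<in> units_of_ring"
  obtain u' where u: "u * u' = 1" "u' * u = 1" using uU by (rule U_E)
  define y where "y = (1 - h) * u' * h"
  have hg: "h * (1 - h) = 0" using h by (simp add: algebra_simps)
  have "y * y = (1 - h) * u' * (h * (1 - h)) * u' * h" unfolding y_def by (simp add: mult.assoc)
  then have "y * y = 0" using hg by simp
  then have "d * y \<in> Delta" using d by (intro D_ry U_sqz)
  then have "1 + d * y \<in> units_of_ring" by (rule D_one)
  then have "1 + (d * (1 - h)) * (u' * h) \<in> units_of_ring" unfolding y_def by (simp add: mult.assoc)
  then have "1 + (u' * h) * (d * (1 - h)) \<in> units_of_ring" by (rule U_jac)
  then have "u * (1 + (u' * h) * (d * (1 - h))) \<in> units_of_ring" using uU by (simp add: U_mult)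
  moreover have "u * (1 + (u' * h) * (d * (1 - h))) = h * d * (1 - h) + u"
    using u by (simp add: algebra_simps flip: mult.assoc)
  ultimately show "h * d * (1 - h) + u \<in> units_of_ring" by simp
qed

lemma U_hdh:
  assumes h: "(h::'a::ring_1) * h = h" and d: "d \<in> Delta"
  shows "1 + h * d * h \<in> units_of_ring"
proof -
  have hh: "\<And>x. h * (h * x) = h * x" using h by (metis mult.assoc)
  have gg: "(1 - h) * (1 - h) = 1 - h" using h by (simp add: algebra_simps)
  have a1: "h * d * (1 - h) \<in> Delta" using h d by (rule D_hdg)
  have "(1 - h) * d * (1 - (1 - h)) \<in> Delta" using gg d by (rule D_hdg)
  then have a2: "(1 - h) * d * h \<in> Delta" by simp
  have "d + - (h * d * (1 - h)) + - ((1 - h) * d * h) \<in> Delta"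
    using a1 a2 d by (intro D_add D_neg)
  moreover have "d + - (h * d * (1 - h)) + - ((1 - h) * d * h) = h * d * h + (1 - h) * d * (1 - h)"
    by (simp add: algebra_simps)
  ultimately have d0: "h * d * h + (1 - h) * d * (1 - h) \<in> Delta" by simp
  obtain c where c: "(1 + (h * d * h + (1 - h) * d * (1 - h))) * c = 1"
     "c * (1 + (h * d * h + (1 - h) * d * (1 - h))) = 1"
    using D_one[OF d0] by (rule U_E)
  have e1: "h * (1 + (h * d * h + (1 - h) * d * (1 - h))) = h + h * d * h"
    using h by (simp add: algebra_simps hh)
  have e2: "(1 + (h * d * h + (1 - h) * d * (1 - h))) * h = h + h * d * h"
    using h by (simp add: algebra_simps hh mult.assoc)
  have f1: "(h + h * d * h) * c = h" using c(1) e1 by (metis mult.assoc mult_1_right)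
  have f2: "c * (h + h * d * h) = h" using c(2) e2 by (metis mult.assoc mult_1_left)
  have "(1 + h * d * h) * ((1 - h) + h * c * h) = (1 - h) + ((h + h * d * h) * c) * h"
    using h by (simp add: algebra_simps hh mult.assoc)
  also have "\<dots> = 1" using f1 h by simp
  finally have 1: "(1 + h * d * h) * ((1 - h) + h * c * h) = 1" .
  have "((1 - h) + h * c * h) * (1 + h * d * h) = (1 - h) + h * (c * (h + h * d * h))"
    using h by (simp add: algebra_simps hh mult.assoc)
  also have "\<dots> = 1" using f2 h by simp
  finally have 2: "((1 - h) + h * c * h) * (1 + h * d * h) = 1" .
  show ?thesis using 1 2 by (rule U_I)
qed

lemma U_hd:
  assumes h: "(h::'a::ring_1) * h = h" and d: "d \<in> Delta"
  shows "1 + h * d \<in> units_of_ring"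
proof -
  have hh: "\<And>x. h * (h * x) = h * x" using h by (metis mult.assoc)
  have "(h * d * (1 - h)) * (h * d * (1 - h)) = h * d * ((1 - h) * h) * d * (1 - h)"
    by (simp add: mult.assoc)
  then have "(h * d * (1 - h)) * (h * d * (1 - h)) = 0" using h by (simp add: algebra_simps)
  then have "1 + h * d * (1 - h) \<in> units_of_ring" by (rule U_sqz)
  then have "(1 + h * d * (1 - h)) * (1 + h * d * h) \<in> units_of_ring"
    using U_hdh[OF h d] by (rule U_mult)
  moreover have "(1 + h * d * (1 - h)) * (1 + h * d * h) = 1 + h * d"
    using h by (simp add: algebra_simps hh mult.assoc)
  ultimately show ?thesis by simp
qed

lemma D_lidem:
  assumes h: "(h::'a::ring_1) * h = h" and d: "d \<in> Delta"
  shows "h * d \<in> Delta"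
proof (rule D_I)
  fix u :: 'a assume uU: "u \<in> units_of_ring"
  obtain u' where u: "u * u' = 1" "u' * u = 1" using uU by (rule U_E)
  have u'U: "u' \<in> units_of_ring" using u by (intro U_I[of u' u]) auto
  have uu: "\<And>x. u' * (u * x) = x" "\<And>x. u * (u' * x) = x" using u by (metis mult.assoc mult_1_left)+
  have hh: "\<And>x. h * (h * x) = h * x" using h by (metis mult.assoc)
  have "(u' * h * u) * (u' * h * u) = u' * h * u" using hh uu by (simp add: mult.assoc)
  moreover have "u' * d \<in> Delta" using u'U d by (rule D_lunit)
  ultimately have "1 + (u' * h * u) * (u' * d) \<in> units_of_ring" by (rule U_hd)
  then have "u * (1 + (u' * h * u) * (u' * d)) \<in> units_of_ring" using uU by (simp add: U_mult)
  moreover have "u * (1 + (u' * h * u) * (u' * d)) = h * d + u"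
    using uu by (simp add: algebra_simps mult.assoc)
  ultimately show "h * d + u \<in> units_of_ring" by simp
qed

lemma D_mult:
  assumes a: "(a::'a::ring_1) \<in> Delta" and b: "b \<in> Delta"
  shows "a * b \<in> Delta"
proof (rule D_I)
  fix u :: 'a assume uU: "u \<in> units_of_ring"
  obtain u' where u: "u * u' = 1" "u' * u = 1" using uU by (rule U_E)
  have u'U: "u' \<in> units_of_ring" using u by (intro U_I[of u' u]) auto
  have uu: "\<And>x. u * (u' * x) = x" using u by (metis mult.assoc mult_1_left)
  have a': "u' * a \<in> Delta" using u'U a by (rule D_lunit)
  have "(1 + u' * a) * (1 + b) \<in> units_of_ring" using a' b by (intro U_mult D_one)
  then have "- (u' * a + b) + (1 + u' * a) * (1 + b) \<in> units_of_ring"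
    using a' b by (intro D_D D_neg D_add)
  moreover have "- (u' * a + b) + (1 + u' * a) * (1 + b) = 1 + u' * a * b"
    by (simp add: algebra_simps)
  ultimately have "u * (1 + u' * a * b) \<in> units_of_ring" using uU by (simp add: U_mult)
  moreover have "u * (1 + u' * a * b) = a * b + u" using uu by (simp add: algebra_simps mult.assoc)
  ultimately show "a * b + u \<in> units_of_ring" by simp
qed

lemma D_trip:
  assumes e: "(e::'a::ring_1) ^ 3 = e" and d: "d \<in> Delta"
  shows "e * d \<in> Delta"
proof -
  have e3: "e * (e * e) = e" using e by (simp add: power3_eq_cube mult.assoc)
  have e3x: "\<And>x. e * (e * (e * x)) = e * x" using e3 by (metis mult.assoc)
  define w where "w = 1 - e * e + e"
  define k where "k = 1 - e * e"
  have "w * w = 1" unfolding w_def by (simp add: algebra_simps e3 e3x)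
  then have wU: "w \<in> units_of_ring" by (intro U_I[of w w])
  have kk: "k * k = k" unfolding k_def by (simp add: algebra_simps e3 e3x)
  have "w * d + - (k * d) \<in> Delta" using wU kk d by (intro D_add D_neg D_lunit D_lidem)
  moreover have "w * d + - (k * d) = e * d" unfolding w_def k_def by (simp add: algebra_simps)
  ultimately show ?thesis by simp
qed

lemma D_left:
  assumes dt: "DT_ring TYPE('a::ring_1)" and d: "(d::'a) \<in> Delta"
  shows "r * d \<in> Delta"
proof -
  obtain e d' where e: "e \<in> Tr" and d': "d' \<in> Delta" and r: "r = e + d'"
    using dt unfolding DT_ring_def by blast
  have "e * d + d' * d \<in> Delta" using e d d'
    by (intro D_add D_trip D_mult) (auto simp: Tr_def)
  then show ?thesis using r by (simp add: algebra_simps)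
qed

section \<open>Jacobson radical\<close>

lemma J_mem: "x \<in> jacobson \<longleftrightarrow> (\<forall>M. maximal_left_ideal M \<longrightarrow> x \<in> M)"
  unfolding jacobson_def by auto

lemma li_0: "left_ideal I \<Longrightarrow> 0 \<in> I"
  unfolding left_ideal_def by auto
lemma li_diff: "left_ideal I \<Longrightarrow> x \<in> I \<Longrightarrow> y \<in> I \<Longrightarrow> x - y \<in> I"
  unfolding left_ideal_def by auto
lemma li_mult: "left_ideal I \<Longrightarrow> x \<in> I \<Longrightarrow> r * x \<in> I"
  unfolding left_ideal_def by auto
lemma li_add: "left_ideal I \<Longrightarrow> x \<in> I \<Longrightarrow> y \<in> I \<Longrightarrow> x + y \<in> I"
proof -
  assume I: "left_ideal I" "x \<in> I" "y \<in> I"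
  then have "x - (0 - y) \<in> I" by (intro li_diff li_0)
  then show ?thesis by simp
qed

lemma li_one: "left_ideal I \<Longrightarrow> (1::'a::ring_1) \<in> I \<Longrightarrow> I = UNIV"
  using li_mult[of I 1] by auto

lemma gen:
  assumes M: "maximal_left_ideal (M::'a::ring_1 set)" and a: "a \<notin> M"
  shows "\<exists>m\<in>M. \<exists>q. y = m + q * a"
proof -
  define L where "L = {m + q * a | m q. m \<in> M}"
  have HM: "left_ideal M" using M unfolding maximal_left_ideal_def by auto
  have "left_ideal L" unfolding left_ideal_def
  proof (intro conjI ballI allI)
    have "(0::'a) = 0 + 0 * a" by simp
    then show "0 \<in> L" unfolding L_def using li_0[OF HM] by blast
  next
    fix x z assume "x \<in> L" "z \<in> L"
    then obtain m1 q1 m2 q2 where "x = m1 + q1 * a" "z = m2 + q2 * a" "m1 \<in> M" "m2 \<in> M"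
      unfolding L_def by auto
    then have "x - z = (m1 - m2) + (q1 - q2) * a" "m1 - m2 \<in> M"
      using li_diff[OF HM] by (auto simp: algebra_simps)
    then show "x - z \<in> L" unfolding L_def by blast
  next
    fix r x assume "x \<in> L"
    then obtain m1 q1 where "x = m1 + q1 * a" "m1 \<in> M" unfolding L_def by auto
    then have "r * x = (r * m1) + (r * q1) * a" "r * m1 \<in> M"
      using li_mult[OF HM] by (auto simp: algebra_simps mult.assoc)
    then show "r * x \<in> L" unfolding L_def by blast
  qed
  moreover have "M \<subseteq> L"
  proof
    fix x assume "x \<in> M"
    moreover have "x = x + 0 * a" by simp
    ultimately show "x \<in> L" unfolding L_def by blast
  qed
  moreover have "a \<in> L"
  proof -
    have "a = 0 + 1 * a" by simp
    then show ?thesis unfolding L_def using li_0[OF HM] by blast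
  qed
  ultimately have "L = UNIV" using M a unfolding maximal_left_ideal_def by blast
  then show ?thesis unfolding L_def by blast
qed

lemma J_qr:
  assumes "\<And>r. \<exists>c. c * (1 - r * (y::'a::ring_1)) = 1"
  shows "y \<in> jacobson"
  unfolding J_mem
proof (intro allI impI)
  fix M :: "'a set" assume M: "maximal_left_ideal M"
  have HM: "left_ideal M" using M unfolding maximal_left_ideal_def by auto
  show "y \<in> M"
  proof (rule ccontr)
    assume "y \<notin> M"
    then obtain m q where m: "m \<in> M" "1 = m + q * y" using gen[OF M] by blast
    obtain c where "c * (1 - q * y) = 1" using assms by blast
    moreover have "1 - q * y = m" using m(2) by (simp add: algebra_simps)
    ultimately have "1 \<in> M" using li_mult[OF HM m(1)] by metis
    then show False using li_one[OF HM] M unfolding maximal_left_ideal_def by auto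
  qed
qed

lemma J_right:
  assumes j: "j \<in> jacobson"
  shows "j * (r::'a::ring_1) \<in> jacobson"
  unfolding J_mem
proof (intro allI impI)
  fix M :: "'a set" assume M: "maximal_left_ideal M"
  have HM: "left_ideal M" using M unfolding maximal_left_ideal_def by auto
  show "j * r \<in> M"
  proof (cases "r \<in> M")
    case True then show ?thesis using li_mult[OF HM] by blast
  next
    case False
    define K where "K = {s. s * r \<in> M}"
    have KL: "left_ideal K" unfolding left_ideal_def
    proof (intro conjI ballI allI)
      show "0 \<in> K" unfolding K_def using li_0[OF HM] by simp
    next
      fix x y assume "x \<in> K" "y \<in> K"
      then have "x * r - y * r \<in> M" unfolding K_def using li_diff[OF HM] by simp
      then show "x - y \<in> K" unfolding K_def by (simp add: left_diff_distrib)
    next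
      fix q x assume "x \<in> K"
      then have "q * (x * r) \<in> M" unfolding K_def using li_mult[OF HM] by simp
      then show "q * x \<in> K" unfolding K_def by (simp add: mult.assoc)
    qed
    have "maximal_left_ideal K" unfolding maximal_left_ideal_def
    proof (intro conjI allI impI KL)
      show "K \<noteq> UNIV"
      proof
        assume "K = UNIV"
        then have "1 \<in> K" by simp
        then show False using False unfolding K_def by simp
      qed
    next
      fix I assume I: "left_ideal I \<and> K \<subseteq> I"
      show "I = K \<or> I = UNIV"
      proof (cases "I = K")
        case False
        then obtain s where s: "s \<in> I" "s \<notin> K" using I by blast
        then have "s * r \<notin> M" unfolding K_def by auto
        then obtain m q where m: "m \<in> M" "r = m + q * (s * r)" using gen[OF M] by blast
        have "(1 - q * s) * r = m" using m(2) by (simp add: algebra_simps mult.assoc)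
        then have "1 - q * s \<in> I" using I m(1) unfolding K_def by auto
        moreover have "q * s \<in> I" using I s(1) li_mult by blast
        ultimately have "(1 - q * s) + q * s \<in> I" using I li_add by blast
        then show ?thesis using I li_one by auto
      qed simp
    qed
    then have "j \<in> K" using j unfolding J_mem by blast
    then show ?thesis unfolding K_def by simp
  qed
qed

lemma mli: "maximal_left_ideal M \<Longrightarrow> left_ideal M"
  unfolding maximal_left_ideal_def by simp

lemma J_diff: "x \<in> jacobson \<Longrightarrow> y \<in> jacobson \<Longrightarrow> x - (y::'a::ring_1) \<in> jacobson"
  unfolding J_mem by (meson li_diff mli)
lemma J_add: "x \<in> jacobson \<Longrightarrow> y \<in> jacobson \<Longrightarrow> x + (y::'a::ring_1) \<in> jacobson"
  unfolding J_mem by (meson li_add mli)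
lemma J_mult: "x \<in> jacobson \<Longrightarrow> r * (x::'a::ring_1) \<in> jacobson"
  unfolding J_mem by (meson li_mult mli)

lemma D_J:
  assumes dt: "DT_ring TYPE('a::ring_1)" and d: "(d::'a) \<in> Delta"
  shows "d \<in> jacobson"
proof (rule J_qr)
  fix r :: 'a
  have "(- r) * d \<in> Delta" using dt d by (rule D_left)
  then have "1 + (- r) * d \<in> units_of_ring" by (rule D_one)
  then obtain c where "(1 + (- r) * d) * c = 1" "c * (1 + (- r) * d) = 1" by (rule U_E)
  then show "\<exists>c. c * (1 - r * d) = 1" by auto
qed

lemma pow_J:
  assumes d: "d \<in> jacobson"
  shows "(b - d) ^ m - (b::'a::ring_1) ^ m \<in> jacobson"
proof (induction m)
  case 0
  then show ?case using J_diff[OF d d] by simp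
next
  case (Suc m)
  have "(b - d) * ((b - d) ^ m - b ^ m) - d * b ^ m \<in> jacobson"
    using Suc J_mult J_diff J_right[OF d] by blast
  moreover have "(b - d) * ((b - d) ^ m - b ^ m) - d * b ^ m = (b - d) ^ Suc m - b ^ Suc m"
    by (simp add: algebra_simps)
  ultimately show ?case by simp
qed

lemma trip_pow:
  assumes "(e::'a::ring_1) ^ 3 = e"
  shows "e ^ (2 * k + 1) = e"
proof (induction k)
  case 0 then show ?case by simp
next
  case (Suc k)
  have "e ^ (2 * Suc k + 1) = e * (e * e ^ (2 * k + 1))" by simp
  also have "\<dots> = e ^ 3" using Suc by (simp add: power3_eq_cube mult.assoc)
  finally show ?case using assms by simp
qed

theorem lemma4p2:
  assumes "DT_ring TYPE('a::ring_1)"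
  shows "quotient_by_jacobson_reduced TYPE('a)"
  unfolding quotient_by_jacobson_reduced_def
proof (intro allI impI)
  fix x :: 'a and n :: nat
  assume xn: "x ^ n \<in> jacobson"
  show "x \<in> jacobson"
  proof (cases n)
    case 0
    then have one: "(1::'a) \<in> jacobson" using xn by simp
    show ?thesis unfolding J_mem
    proof (intro allI impI)
      fix M :: "'a set" assume M: "maximal_left_ideal M"
      then have "1 \<in> M" using one unfolding J_mem by blast
      then have "M = UNIV" using li_one mli[OF M] by blast
      then show "x \<in> M" by simp
    qed
  next
    case (Suc n')
    obtain e d where e: "e \<in> Tr" and d: "d \<in> Delta" and x: "x = e + d"
      using assms unfolding DT_ring_def by blast
    have e3: "e ^ 3 = e" using e by (simp add: Tr_def)
    have dJ: "d \<in> jacobson" using assms d by (rule D_J)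
    have "(x - d) ^ n - x ^ n \<in> jacobson" using dJ by (rule pow_J)
    then have "((x - d) ^ n - x ^ n) + x ^ n \<in> jacobson" using xn by (rule J_add)
    then have en: "e ^ n \<in> jacobson" using x by simp
    have "e ^ (n + 1) * e ^ n \<in> jacobson" using en by (rule J_mult)
    moreover have "e ^ (n + 1) * e ^ n = e ^ (2 * n + 1)"
    proof -
      have "2 * n + 1 = (n + 1) + n" by simp
      then show ?thesis by (simp only: power_add)
    qed
    ultimately have "e \<in> jacobson" using trip_pow[OF e3, of n] by simp
    then show ?thesis using x J_add dJ by blast
  qed
qed

end
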